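(* Let $v$ and $v'$ be distinct true twin vertices of a graph $G$ and $S$ a DNS of $G$. Then: (1) for every $x\in\widehat S$ and $i\in\{1,2\}$, if $v'\in N_S^i[x]$ then $v\in N_S^i[x]$; (2) if $v,v'\in\widehat S$, then there exists a DNS $S'$ of $G$ with $\widehat{S'}=\widehat S$ in which $v$ and $v'$ appear consecutively.
   Context: Graphs are finite, simple, undirected; $N[v]$ closed neighborhood; $v,v'$ are true twins if $N[v]=N[v']$. A sequence $S=(v_1,\dots,v_k)$ of distinct vertices is a double neighborhood sequence (DNS) if for each $i$ some $w\in N[v_i]$ satisfies $|\{j<i:w\in N[v_j]\}|\le1$. $\widehat S$ is its vertex set. $N_S^1[v_i]=N[v_i]\setminus\bigcup_{j<i}N[v_j]$ and $N_S^2[v_i]=\{w\in N[v_i]:|\{j<i:w\in N[v_j]\}|=1\}$. *)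

theory Defs
  imports Main
begin

definition simple_graph :: "'a set \<Rightarrow> ('a \<Rightarrow> 'a \<Rightarrow> bool) \<Rightarrow> bool" where
  "simple_graph V E \<longleftrightarrow> finite V \<and> (\<forall>x y. E x y \<longrightarrow> x \<in> V \<and> y \<in> V)
     \<and> (\<forall>x y. E x y \<longrightarrow> E y x) \<and> (\<forall>x. \<not> E x x)"

definition cnbhd :: "'a set \<Rightarrow> ('a \<Rightarrow> 'a \<Rightarrow> bool) \<Rightarrow> 'a \<Rightarrow> 'a set" where
  "cnbhd V E v = {w \<in> V. w = v \<or> E v w}"

definition true_twins :: "'a set \<Rightarrow> ('a \<Rightarrow> 'a \<Rightarrow> bool) \<Rightarrow> 'a \<Rightarrow> 'a \<Rightarrow> bool" where
  "true_twins V E v v' \<longleftrightarrow> v \<in> V \<and> v' \<in> V \<and> cnbhd V E v = cnbhd V E v'"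

definition cover_count :: "'a set \<Rightarrow> ('a \<Rightarrow> 'a \<Rightarrow> bool) \<Rightarrow> 'a list \<Rightarrow> nat \<Rightarrow> 'a \<Rightarrow> nat" where
  "cover_count V E S i w = card {j. j < i \<and> w \<in> cnbhd V E (S ! j)}"

definition is_dns :: "'a set \<Rightarrow> ('a \<Rightarrow> 'a \<Rightarrow> bool) \<Rightarrow> 'a list \<Rightarrow> bool" where
  "is_dns V E S \<longleftrightarrow> distinct S \<and> set S \<subseteq> V \<and>
     (\<forall>i < length S. \<exists>w \<in> cnbhd V E (S ! i). cover_count V E S i w \<le> 1)"

text \<open>Position of a vertex x in S (meaningful for x \<in> set S).\<close>
definition pos :: "'a list \<Rightarrow> 'a \<Rightarrow> nat" where
  "pos S x = length (takeWhile (\<lambda>y. y \<noteq> x) S)"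

definition NS1 :: "'a set \<Rightarrow> ('a \<Rightarrow> 'a \<Rightarrow> bool) \<Rightarrow> 'a list \<Rightarrow> 'a \<Rightarrow> 'a set" where
  "NS1 V E S x = cnbhd V E x - (\<Union>j \<in> {..<pos S x}. cnbhd V E (S ! j))"

definition NS2 :: "'a set \<Rightarrow> ('a \<Rightarrow> 'a \<Rightarrow> bool) \<Rightarrow> 'a list \<Rightarrow> 'a \<Rightarrow> 'a set" where
  "NS2 V E S x = {w \<in> cnbhd V E x. cover_count V E S (pos S x) w = 1}"

end

theory Submission
  imports Defs
begin

definition bf :: "'a list \<Rightarrow> 'a \<Rightarrow> 'a set" where
  "bf S x = set (takeWhile (\<lambda>y. y \<noteq> x) S)"

lemma cc_set:
  assumes "distinct S" "i \<le> length S"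
  shows "cover_count V E S i w = card {y \<in> set (take i S). w \<in> cnbhd V E y}"
proof -
  have "{y \<in> set (take i S). w \<in> cnbhd V E y} = (\<lambda>j. S ! j) ` {j. j < i \<and> w \<in> cnbhd V E (S ! j)}"
    using assms(2) by (auto simp: in_set_conv_nth image_iff)
  moreover have "inj_on (\<lambda>j. S ! j) {j. j < i \<and> w \<in> cnbhd V E (S ! j)}"
    using assms by (auto simp: inj_on_def nth_eq_iff_index_eq)
  ultimately show ?thesis unfolding cover_count_def by (simp add: card_image)
qed

lemma take_bf:
  assumes "distinct S" "i < length S"
  shows "set (take i S) = bf S (S ! i)"
proof -
  have S: "S = take i S @ S ! i # drop (Suc i) S" using assms(2) by (simp add: id_take_nth_drop)
  have "S ! i \<notin> set (take i S)"
    using assms by (metis S distinct_append distinct.simps(2) not_distinct_conv_prefix)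
  hence "takeWhile (\<lambda>y. y \<noteq> S ! i) S = take i S"
    by (subst S, subst takeWhile_append2) auto
  thus ?thesis by (simp add: bf_def)
qed

lemma dns_iff:
  "is_dns V E S \<longleftrightarrow> distinct S \<and> set S \<subseteq> V \<and>
     (\<forall>x \<in> set S. \<exists>w \<in> cnbhd V E x. card {y \<in> bf S x. w \<in> cnbhd V E y} \<le> 1)"
proof (cases "distinct S")
  case True
  have "(\<forall>i < length S. \<exists>w \<in> cnbhd V E (S ! i). cover_count V E S i w \<le> 1) \<longleftrightarrow>
        (\<forall>x \<in> set S. \<exists>w \<in> cnbhd V E x. card {y \<in> bf S x. w \<in> cnbhd V E y} \<le> 1)"
  proof
    assume H: "\<forall>i < length S. \<exists>w \<in> cnbhd V E (S ! i). cover_count V E S i w \<le> 1"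
    show "\<forall>x \<in> set S. \<exists>w \<in> cnbhd V E x. card {y \<in> bf S x. w \<in> cnbhd V E y} \<le> 1"
    proof
      fix x assume "x \<in> set S"
      then obtain i where i: "i < length S" "x = S ! i" by (auto simp: in_set_conv_nth)
      thus "\<exists>w \<in> cnbhd V E x. card {y \<in> bf S x. w \<in> cnbhd V E y} \<le> 1"
      proof -
        obtain w where "w \<in> cnbhd V E (S ! i)" "cover_count V E S i w \<le> 1" using H i by blast
        moreover have "cover_count V E S i w = card {y \<in> bf S x. w \<in> cnbhd V E y}"
          using cc_set[OF True, of i V E w] take_bf[OF True i(1)] i by simp
        ultimately show ?thesis using i by auto
      qed
    qed
  next
    assume H: "\<forall>x \<in> set S. \<exists>w \<in> cnbhd V E x. card {y \<in> bf S x. w \<in> cnbhd V E y} \<le> 1"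
    show "\<forall>i < length S. \<exists>w \<in> cnbhd V E (S ! i). cover_count V E S i w \<le> 1"
    proof (intro allI impI)
      fix i assume i: "i < length S"
      thus "\<exists>w \<in> cnbhd V E (S ! i). cover_count V E S i w \<le> 1"
      proof -
        obtain w where "w \<in> cnbhd V E (S ! i)" "card {y \<in> bf S (S ! i). w \<in> cnbhd V E y} \<le> 1"
          using H i by (meson nth_mem)
        moreover have "cover_count V E S i w = card {y \<in> bf S (S ! i). w \<in> cnbhd V E y}"
          using cc_set[OF True, of i V E w] take_bf[OF True i(1)] i by simp
        ultimately show ?thesis by (intro bexI[of _ w]) simp_all
      qed
    qed
  qed
  thus ?thesis unfolding is_dns_def by auto
next
  case False
  thus ?thesis unfolding is_dns_def by auto
qed

lemma dns_transfer:
  assumes "is_dns V E S" "distinct T" "set T \<subseteq> V"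
    and "\<And>x. x \<in> set T \<Longrightarrow> \<exists>x' \<in> set S. cnbhd V E x' \<subseteq> cnbhd V E x \<and> bf T x \<subseteq> bf S x'"
  shows "is_dns V E T"
  unfolding dns_iff
proof (intro conjI ballI assms(2,3))
  fix x assume x: "x \<in> set T"
  then obtain x' where x': "x' \<in> set S" "cnbhd V E x' \<subseteq> cnbhd V E x" "bf T x \<subseteq> bf S x'"
    using assms(4) by blast
  then obtain w where w: "w \<in> cnbhd V E x'" "card {y \<in> bf S x'. w \<in> cnbhd V E y} \<le> 1"
    using assms(1) unfolding dns_iff by blast
  have "card {y \<in> bf T x. w \<in> cnbhd V E y} \<le> card {y \<in> bf S x'. w \<in> cnbhd V E y}"
    by (rule card_mono) (use x'(3) in \<open>auto simp: bf_def\<close>)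
  with w x'(2) show "\<exists>w \<in> cnbhd V E x. card {y \<in> bf T x. w \<in> cnbhd V E y} \<le> 1"
    by force
qed

lemma bf_app1: "x \<in> set A \<Longrightarrow> bf (A @ R) x = bf A x"
  by (simp add: bf_def takeWhile_append1)

lemma bf_app2: "x \<notin> set A \<Longrightarrow> bf (A @ R) x = set A \<union> bf R x"
  unfolding bf_def by (subst takeWhile_append2) auto

lemma bf_cons: "bf (x # R) x = {}" by (simp add: bf_def)
lemma bf_cons2: "y \<noteq> x \<Longrightarrow> bf (y # R) x = insert y (bf R x)" by (simp add: bf_def)

lemma move_lemma:
  assumes "is_dns V E (A @ v # B @ v' # C)" "cnbhd V E v = cnbhd V E v'"
  shows "is_dns V E (A @ B @ v # v' # C)"
proof -
  let ?S = "A @ v # B @ v' # C"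
  let ?T = "A @ B @ v # v' # C"
  have d: "distinct ?S" "set ?S \<subseteq> V" using assms(1) by (auto simp: is_dns_def)
  show ?thesis
  proof (rule dns_transfer[OF assms(1)])
    show "distinct ?T" using d(1) by auto
    show "set ?T \<subseteq> V" using d(2) by auto
    fix x assume x: "x \<in> set ?T"
    consider "x \<in> set A" | "x \<in> set B" | "x = v" | "x = v'" | "x \<in> set C" using x by auto
    thus "\<exists>x' \<in> set ?S. cnbhd V E x' \<subseteq> cnbhd V E x \<and> bf ?T x \<subseteq> bf ?S x'"
    proof cases
      case 1
      thus ?thesis by (intro bexI[of _ x]) (auto simp: bf_app1)
    next
      case 2
      have "x \<notin> set A" "x \<noteq> v" "x \<noteq> v'" "x \<notin> set C" using d(1) 2 by auto
      with 2 show ?thesis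
        by (intro bexI[of _ x]) (auto simp: bf_app1 bf_app2 bf_cons2)
    next
      case 3
      have "v \<notin> set A" "v \<notin> set B" "v \<noteq> v'" "v' \<notin> set A" "v' \<notin> set B" using d(1) by auto
      with 3 assms(2) show ?thesis
        by (intro bexI[of _ v']) (auto simp: bf_app1 bf_app2 bf_cons2 bf_cons)
    next
      case 4
      have "v \<notin> set A" "v \<notin> set B" "v \<noteq> v'" "v' \<notin> set A" "v' \<notin> set B" using d(1) by auto
      with 4 show ?thesis
        by (intro bexI[of _ v']) (auto simp: bf_app1 bf_app2 bf_cons2 bf_cons)
    next
      case 5
      have "x \<notin> set A" "x \<notin> set B" "x \<noteq> v" "x \<noteq> v'" using d(1) 5 by auto
      with 5 show ?thesis
        by (intro bexI[of _ x]) (auto simp: bf_app1 bf_app2 bf_cons2)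
    qed
  qed
qed

lemma twin_sym:
  assumes "simple_graph V E" "v \<in> V"
  shows "v \<in> cnbhd V E y \<longleftrightarrow> y \<in> cnbhd V E v"
  using assms unfolding simple_graph_def cnbhd_def by auto

lemma twin_key:
  assumes "simple_graph V E" "true_twins V E v v'"
  shows "v \<in> cnbhd V E y \<longleftrightarrow> v' \<in> cnbhd V E y"
proof -
  have "v \<in> V" "v' \<in> V" "cnbhd V E v = cnbhd V E v'" using assms(2) by (auto simp: true_twins_def)
  thus ?thesis using twin_sym[OF assms(1)] by metis
qed

lemma adj_helper:
  "Suc (length xs) < length (xs @ a # b # ys) \<and> (xs @ a # b # ys) ! length xs = a \<and>
   (xs @ a # b # ys) ! Suc (length xs) = b"
  by (simp add: nth_append)

theorem lemma2:
  fixes V :: "'a set" and E :: "'a \<Rightarrow> 'a \<Rightarrow> bool" and v v' :: 'a and S :: "'a list"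
  assumes "simple_graph V E"
    and "v \<noteq> v'" and "true_twins V E v v'"
    and "is_dns V E S"
  shows "(\<forall>x \<in> set S. (v' \<in> NS1 V E S x \<longrightarrow> v \<in> NS1 V E S x)
                      \<and> (v' \<in> NS2 V E S x \<longrightarrow> v \<in> NS2 V E S x))
       \<and> (v \<in> set S \<and> v' \<in> set S \<longrightarrow>
            (\<exists>S'. is_dns V E S' \<and> set S' = set S \<and>
               (\<exists>k. Suc k < length S' \<and>
                  ((S' ! k = v \<and> S' ! Suc k = v') \<or> (S' ! k = v' \<and> S' ! Suc k = v)))))"
proof (intro conjI ballI impI)
  have key: "\<And>y. v \<in> cnbhd V E y \<longleftrightarrow> v' \<in> cnbhd V E y" using twin_key assms(1,3) .
  fix x
  have e1: "v' \<in> cnbhd V E y \<longleftrightarrow> v \<in> cnbhd V E y" for y using key[of y] by (rule sym)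
  show "v' \<in> NS1 V E S x \<Longrightarrow> v \<in> NS1 V E S x" unfolding NS1_def by (simp only: e1 Diff_iff UN_iff) blast
  have "{j. j < pos S x \<and> v' \<in> cnbhd V E (S ! j)} = {j. j < pos S x \<and> v \<in> cnbhd V E (S ! j)}"
    by (simp only: e1)
  thus "v' \<in> NS2 V E S x \<Longrightarrow> v \<in> NS2 V E S x" unfolding NS2_def cover_count_def
    by (simp only: e1 mem_Collect_eq)
next
  assume vs: "v \<in> set S \<and> v' \<in> set S"
  have N: "cnbhd V E v = cnbhd V E v'" using assms(3) by (simp add: true_twins_def)
  obtain P Q where PQ: "S = P @ v # Q" using vs split_list[of v S] by blast
  have "v' \<in> set (P @ v # Q)" using vs PQ by simp
  hence "v' \<in> set P \<or> v' \<in> set Q" using assms(2) by simp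
  thus "\<exists>S'. is_dns V E S' \<and> set S' = set S \<and>
               (\<exists>k. Suc k < length S' \<and>
                  ((S' ! k = v \<and> S' ! Suc k = v') \<or> (S' ! k = v' \<and> S' ! Suc k = v)))"
  proof
    assume "v' \<in> set Q"
    then obtain B C where "Q = B @ v' # C" using split_list[of v' Q] by blast
    with PQ have S: "S = P @ v # B @ v' # C" by simp
    have d: "is_dns V E ((P @ B) @ v # v' # C)" using move_lemma[OF assms(4)[unfolded S] N] by simp
    have st: "set ((P @ B) @ v # v' # C) = set S" using S by auto
    note h = adj_helper[of "P @ B" v v' C]
    show ?thesis
      apply (rule exI[of _ "(P @ B) @ v # v' # C"])
      apply (rule conjI[OF d], rule conjI[OF st])
      apply (rule exI[of _ "length (P @ B)"])
      using h by (elim conjE) (intro conjI disjI1; assumption)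
  next
    assume "v' \<in> set P"
    then obtain A B where "P = A @ v' # B" using split_list[of v' P] by blast
    with PQ have S: "S = A @ v' # (B @ v # Q)" by simp
    have d: "is_dns V E ((A @ B) @ v' # v # Q)" using move_lemma[OF assms(4)[unfolded S] N[symmetric]] by simp
    have st: "set ((A @ B) @ v' # v # Q) = set S" using S by auto
    note h = adj_helper[of "A @ B" v' v Q]
    show ?thesis
      apply (rule exI[of _ "(A @ B) @ v' # v # Q"])
      apply (rule conjI[OF d], rule conjI[OF st])
      apply (rule exI[of _ "length (A @ B)"])
      using h by (elim conjE) (intro conjI disjI2; assumption)
  qed
qed

end
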